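(* Let $(G,\Lambda)$ be a self-similar action with $|\Lambda^0|<\infty$. Then for every cycline triple $(\mu,g,\nu)$, one has $s_\mu s_\mu^*=s_\nu s_\nu^*$ in $\mathcal{O}_{G,\Lambda}$.
   Context: Let $k\ge1$. A $k$-graph is a countable small category $\Lambda$ together with a functor $d:\Lambda\to\mathbb{N}^k$ (the degree map) with the unique factorization property: for every $\mu\in\Lambda$ and $m,n\in\mathbb{N}^k$ with $d(\mu)=m+n$ there are unique $\alpha,\beta\in\Lambda$ with $d(\alpha)=m$, $d(\beta)=n$ and $\mu=\alpha\beta$. Write $\Lambda^n=d^{-1}(n)$; $\Lambda^0$ is identified with the set of objects (vertices), and $r,s$ denote range and source. For $v\in\Lambda^0$ and $n\in\mathbb{N}^k$ write $v\Lambda^n=r^{-1}(v)\cap\Lambda^n$. All $k$-graphs are assumed row-finite ($|v\Lambda^n|<\infty$) and source-free ($v\Lambda^n\neq\emptyset$) for all $v,n$. Infinite paths: let $\Omega_k=\{(p,q)\in\mathbb{N}^k\times\mathbb{N}^k:p\le q\}$ with $r(p,q)=(p,p)$, $s(p,q)=(q,q)$, $(p,q)(q,m)=(p,m)$, $d(p,q)=q-p$. An infinite path is a degree-preserving functor $x:\Omega_k\to\Lambda$; $\Lambda^\infty$ is the set of infinite paths, $v\Lambda^\infty=\{x:x(0,0)=v\}$, and for $\mu\in\Lambda$, $x\in s(\mu)\Lambda^\infty$, $\mu x$ is the unique infinite path $y$ with $y(0,d(\mu))=\mu$ and $y(d(\mu)+p,d(\mu)+q)=x(p,q)$ for all $p\le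 q$. Self-similar actions: $G$ is a countable discrete group. A self-similar action $(G,\Lambda)$ consists of an action of $G$ on $\Lambda$ by automorphisms (bijections preserving $d$, $r$, $s$), written $g\cdot\mu$, and a restriction map $G\times\Lambda\to G$, $(g,\mu)\mapsto g|_\mu$, such that for all $g,h\in G$, $v\in\Lambda^0$ and $\mu,\nu$ with $s(\mu)=r(\nu)$: $g\cdot(\mu\nu)=(g\cdot\mu)(g|_\mu\cdot\nu)$; $g|_v=g$; $g|_{\mu\nu}=(g|_\mu)|_\nu$; $1_G|_\mu=1_G$; $(gh)|_\mu=g|_{h\cdot\mu}\,h|_\mu$. For $x\in\Lambda^\infty$, $(g\cdot x)(p,q)=g|_{x(0,p)}\cdot x(p,q)$. Cycline triples: a triple $(\mu,g,\nu)\in\Lambda\times G\times\Lambda$ with $s(\mu)=g\cdot s(\nu)$ is cycline if $\mu(g\cdot x)=\nu x$ for all $x\in s(\nu)\Lambda^\infty$. The algebra: for a self-similar action with $|\Lambda^0|<\infty$, $\mathcal{O}_{G,\Lambda}$ is the universal unital C*-algebra generated by unitaries $\{u_g\}_{g\in G}$ and partial isometries $\{s_\mu\}_{\mu\in\Lambda}$ such that $\{s_v\}_{v\in\Lambda^0}$ are mutually orthogonal projections; $s_{\mu\nu}=s_\mu s_\nu$ when $s(\mu)=r(\nu)$; $s_\mu^*s_\mu=s_{s(\mu)}$; $s_v=\sum_{\mu\in v\Lambda^n}s_\mu s_\mu^*$ for all $v\in\Lambda^0$, $n\in\mathbb{N}^k$; $u_{gh}=u_gu_h$; and $u_gs_\mu=s_{g\cdot\mu}u_{g|_\mu}$.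 *)

theory Defs
  imports Complex_Main "HOL-Library.Countable_Set" "HOL-Algebra.Group"
begin

text \<open>A unital C*-algebra: a complete normed unital algebra with a complex scalar
multiplication compatible with the real one, and an isometric-type involution
satisfying the C*-identity.  (Norm of the unit is 1, so these are nonzero algebras.)\<close>

class cstar_algebra = real_normed_algebra_1 + complete_space +
  fixes adj :: "'a \<Rightarrow> 'a"
    and scaleC :: "complex \<Rightarrow> 'a \<Rightarrow> 'a"
  assumes scaleC_scaleR: "scaleC (complex_of_real a) x = scaleR a x"
    and scaleC_add_left: "scaleC (a + b) x = scaleC a x + scaleC b x"
    and scaleC_add_right: "scaleC a (x + y) = scaleC a x + scaleC a y"
    and scaleC_scaleC: "scaleC a (scaleC b x) = scaleC (a * b) x"
    and scaleC_one: "scaleC 1 x = x"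
    and scaleC_mult_left: "scaleC a (x * y) = scaleC a x * y"
    and scaleC_mult_right: "scaleC a (x * y) = x * scaleC a y"
    and norm_scaleC: "norm (scaleC a x) = cmod a * norm x"
    and adj_adj: "adj (adj x) = x"
    and adj_add: "adj (x + y) = adj x + adj y"
    and adj_mult: "adj (x * y) = adj y * adj x"
    and adj_scaleC: "adj (scaleC a x) = scaleC (cnj a) (adj x)"
    and cstar_identity: "norm (adj x * x) = (norm x)^2"

text \<open>Elements of N^k are functions nat => nat vanishing from index k on.\<close>

definition inNk :: "nat \<Rightarrow> (nat \<Rightarrow> nat) \<Rightarrow> bool" where
  "inNk k m \<longleftrightarrow> (\<forall>i. k \<le> i \<longrightarrow> m i = 0)"

definition addv :: "(nat \<Rightarrow> nat) \<Rightarrow> (nat \<Rightarrow> nat) \<Rightarrow> nat \<Rightarrow> nat" where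
  "addv m n = (\<lambda>i. m i + n i)"

definition subv :: "(nat \<Rightarrow> nat) \<Rightarrow> (nat \<Rightarrow> nat) \<Rightarrow> nat \<Rightarrow> nat" where
  "subv m n = (\<lambda>i. m i - n i)"

definition leqv :: "(nat \<Rightarrow> nat) \<Rightarrow> (nat \<Rightarrow> nat) \<Rightarrow> bool" where
  "leqv m n \<longleftrightarrow> (\<forall>i. m i \<le> n i)"

definition zerov :: "nat \<Rightarrow> nat" where
  "zerov = (\<lambda>_. 0)"

text \<open>A small category with morphism set P, objects identified with identity morphisms,
range r, source s, composition c (c mu nu = mu nu, defined when s mu = r nu), and
degree functor d into N^k, with the unique factorisation property.\<close>

definition kgraph :: "nat \<Rightarrow> 'p set \<Rightarrow> ('p \<Rightarrow> 'p) \<Rightarrow> ('p \<Rightarrow> 'p) \<Rightarrow> ('p \<Rightarrow> 'p \<Rightarrow> 'p)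
    \<Rightarrow> ('p \<Rightarrow> nat \<Rightarrow> nat) \<Rightarrow> bool" where
  "kgraph k P r s c d \<longleftrightarrow>
     1 \<le> k \<and> countable P \<and>
     (\<forall>\<mu>\<in>P. r \<mu> \<in> P \<and> s \<mu> \<in> P \<and> inNk k (d \<mu>)) \<and>
     (\<forall>\<mu>\<in>P. r (r \<mu>) = r \<mu> \<and> s (r \<mu>) = r \<mu> \<and> r (s \<mu>) = s \<mu> \<and> s (s \<mu>) = s \<mu>) \<and>
     (\<forall>\<mu>\<in>P. c (r \<mu>) \<mu> = \<mu> \<and> c \<mu> (s \<mu>) = \<mu>) \<and>
     (\<forall>\<mu>\<in>P. \<forall>\<nu>\<in>P. s \<mu> = r \<nu> \<longrightarrow>
         c \<mu> \<nu> \<in> P \<and> r (c \<mu> \<nu>) = r \<mu> \<and> s (c \<mu> \<nu>) = s \<nu>) \<and>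
     (\<forall>\<mu>\<in>P. \<forall>\<nu>\<in>P. \<forall>\<eta>\<in>P. s \<mu> = r \<nu> \<and> s \<nu> = r \<eta> \<longrightarrow>
         c (c \<mu> \<nu>) \<eta> = c \<mu> (c \<nu> \<eta>)) \<and>
     (\<forall>\<mu>\<in>P. d (r \<mu>) = zerov) \<and>
     (\<forall>\<mu>\<in>P. \<forall>\<nu>\<in>P. s \<mu> = r \<nu> \<longrightarrow> d (c \<mu> \<nu>) = addv (d \<mu>) (d \<nu>)) \<and>
     (\<forall>\<mu>\<in>P. \<forall>m n. inNk k m \<and> inNk k n \<and> d \<mu> = addv m n \<longrightarrow>
         (\<exists>!ab. fst ab \<in> P \<and> snd ab \<in> P \<and> s (fst ab) = r (snd ab) \<and>
                d (fst ab) = m \<and> d (snd ab) = n \<and> \<mu> = c (fst ab) (snd ab)))"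

definition vertices :: "'p set \<Rightarrow> ('p \<Rightarrow> nat \<Rightarrow> nat) \<Rightarrow> 'p set" where
  "vertices P d = {v \<in> P. d v = zerov}"

definition vpaths :: "'p set \<Rightarrow> ('p \<Rightarrow> 'p) \<Rightarrow> ('p \<Rightarrow> nat \<Rightarrow> nat) \<Rightarrow> 'p \<Rightarrow> (nat \<Rightarrow> nat) \<Rightarrow> 'p set" where
  "vpaths P r d v n = {\<mu> \<in> P. r \<mu> = v \<and> d \<mu> = n}"

definition row_finite_source_free :: "nat \<Rightarrow> 'p set \<Rightarrow> ('p \<Rightarrow> 'p) \<Rightarrow> ('p \<Rightarrow> nat \<Rightarrow> nat) \<Rightarrow> bool" where
  "row_finite_source_free k P r d \<longleftrightarrow>
     (\<forall>v\<in>vertices P d. \<forall>n. inNk k n \<longrightarrow> finite (vpaths P r d v n) \<and> vpaths P r d v n \<noteq> {})"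

text \<open>An infinite path is a degree-preserving functor from Omega_k; x p q is its value at
(p,q) for p <= q in N^k (values elsewhere are irrelevant).\<close>

definition is_infpath :: "nat \<Rightarrow> 'p set \<Rightarrow> ('p \<Rightarrow> 'p) \<Rightarrow> ('p \<Rightarrow> 'p) \<Rightarrow> ('p \<Rightarrow> 'p \<Rightarrow> 'p)
    \<Rightarrow> ('p \<Rightarrow> nat \<Rightarrow> nat) \<Rightarrow> ((nat \<Rightarrow> nat) \<Rightarrow> (nat \<Rightarrow> nat) \<Rightarrow> 'p) \<Rightarrow> bool" where
  "is_infpath k P r s c d x \<longleftrightarrow>
     (\<forall>p q. inNk k p \<and> inNk k q \<and> leqv p q \<longrightarrow>
        x p q \<in> P \<and> d (x p q) = subv q p \<and> r (x p q) = x p p \<and> s (x p q) = x q q) \<and>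
     (\<forall>p q m. inNk k p \<and> inNk k q \<and> inNk k m \<and> leqv p q \<and> leqv q m \<longrightarrow>
        x p m = c (x p q) (x q m))"

text \<open>is_cat mu x y: y is the infinite path mu x.\<close>
definition is_cat :: "nat \<Rightarrow> 'p set \<Rightarrow> ('p \<Rightarrow> 'p) \<Rightarrow> ('p \<Rightarrow> 'p) \<Rightarrow> ('p \<Rightarrow> 'p \<Rightarrow> 'p)
    \<Rightarrow> ('p \<Rightarrow> nat \<Rightarrow> nat) \<Rightarrow> 'p \<Rightarrow> ((nat \<Rightarrow> nat) \<Rightarrow> (nat \<Rightarrow> nat) \<Rightarrow> 'p)
    \<Rightarrow> ((nat \<Rightarrow> nat) \<Rightarrow> (nat \<Rightarrow> nat) \<Rightarrow> 'p) \<Rightarrow> bool" where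
  "is_cat k P r s c d \<mu> x y \<longleftrightarrow>
     is_infpath k P r s c d y \<and> y zerov (d \<mu>) = \<mu> \<and>
     (\<forall>p q. inNk k p \<and> inNk k q \<and> leqv p q \<longrightarrow> y (addv (d \<mu>) p) (addv (d \<mu>) q) = x p q)"

definition self_similar :: "nat \<Rightarrow> 'p set \<Rightarrow> ('p \<Rightarrow> 'p) \<Rightarrow> ('p \<Rightarrow> 'p) \<Rightarrow> ('p \<Rightarrow> 'p \<Rightarrow> 'p)
    \<Rightarrow> ('p \<Rightarrow> nat \<Rightarrow> nat) \<Rightarrow> ('g, 'b) monoid_scheme \<Rightarrow> ('g \<Rightarrow> 'p \<Rightarrow> 'p) \<Rightarrow> ('g \<Rightarrow> 'p \<Rightarrow> 'g) \<Rightarrow> bool" where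
  "self_similar k P r s c d G act res \<longleftrightarrow>
     group G \<and> countable (carrier G) \<and>
     (\<forall>g\<in>carrier G. bij_betw (act g) P P \<and>
        (\<forall>\<mu>\<in>P. d (act g \<mu>) = d \<mu> \<and> r (act g \<mu>) = act g (r \<mu>) \<and> s (act g \<mu>) = act g (s \<mu>))) \<and>
     (\<forall>\<mu>\<in>P. act \<one>\<^bsub>G\<^esub> \<mu> = \<mu>) \<and>
     (\<forall>g\<in>carrier G. \<forall>h\<in>carrier G. \<forall>\<mu>\<in>P. act (g \<otimes>\<^bsub>G\<^esub> h) \<mu> = act g (act h \<mu>)) \<and>
     (\<forall>g\<in>carrier G. \<forall>\<mu>\<in>P. res g \<mu> \<in> carrier G) \<and>
     (\<forall>g\<in>carrier G. \<forall>\<mu>\<in>P. \<forall>\<nu>\<in>P. s \<mu> = r \<nu> \<longrightarrow>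
        act g (c \<mu> \<nu>) = c (act g \<mu>) (act (res g \<mu>) \<nu>)) \<and>
     (\<forall>g\<in>carrier G. \<forall>v\<in>vertices P d. res g v = g) \<and>
     (\<forall>g\<in>carrier G. \<forall>\<mu>\<in>P. \<forall>\<nu>\<in>P. s \<mu> = r \<nu> \<longrightarrow> res g (c \<mu> \<nu>) = res (res g \<mu>) \<nu>) \<and>
     (\<forall>\<mu>\<in>P. res \<one>\<^bsub>G\<^esub> \<mu> = \<one>\<^bsub>G\<^esub>) \<and>
     (\<forall>g\<in>carrier G. \<forall>h\<in>carrier G. \<forall>\<mu>\<in>P.
        res (g \<otimes>\<^bsub>G\<^esub> h) \<mu> = res g (act h \<mu>) \<otimes>\<^bsub>G\<^esub> res h \<mu>)"

definition act_inf :: "('g \<Rightarrow> 'p \<Rightarrow> 'p) \<Rightarrow> ('g \<Rightarrow> 'p \<Rightarrow> 'g) \<Rightarrow> 'g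
    \<Rightarrow> ((nat \<Rightarrow> nat) \<Rightarrow> (nat \<Rightarrow> nat) \<Rightarrow> 'p) \<Rightarrow> (nat \<Rightarrow> nat) \<Rightarrow> (nat \<Rightarrow> nat) \<Rightarrow> 'p" where
  "act_inf act res g x = (\<lambda>p q. act (res g (x zerov p)) (x p q))"

definition cycline :: "nat \<Rightarrow> 'p set \<Rightarrow> ('p \<Rightarrow> 'p) \<Rightarrow> ('p \<Rightarrow> 'p) \<Rightarrow> ('p \<Rightarrow> 'p \<Rightarrow> 'p)
    \<Rightarrow> ('p \<Rightarrow> nat \<Rightarrow> nat) \<Rightarrow> ('g, 'b) monoid_scheme \<Rightarrow> ('g \<Rightarrow> 'p \<Rightarrow> 'p) \<Rightarrow> ('g \<Rightarrow> 'p \<Rightarrow> 'g)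
    \<Rightarrow> 'p \<Rightarrow> 'g \<Rightarrow> 'p \<Rightarrow> bool" where
  "cycline k P r s c d G act res \<mu> g \<nu> \<longleftrightarrow>
     \<mu> \<in> P \<and> \<nu> \<in> P \<and> g \<in> carrier G \<and> s \<mu> = act g (s \<nu>) \<and>
     (\<forall>x. is_infpath k P r s c d x \<and> x zerov zerov = s \<nu> \<longrightarrow>
        (\<exists>y. is_cat k P r s c d \<mu> (act_inf act res g x) y \<and> is_cat k P r s c d \<nu> x y))"

definition OGL_rep :: "nat \<Rightarrow> 'p set \<Rightarrow> ('p \<Rightarrow> 'p) \<Rightarrow> ('p \<Rightarrow> 'p) \<Rightarrow> ('p \<Rightarrow> 'p \<Rightarrow> 'p)
    \<Rightarrow> ('p \<Rightarrow> nat \<Rightarrow> nat) \<Rightarrow> ('g, 'b) monoid_scheme \<Rightarrow> ('g \<Rightarrow> 'p \<Rightarrow> 'p) \<Rightarrow> ('g \<Rightarrow> 'p \<Rightarrow> 'g)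
    \<Rightarrow> ('g \<Rightarrow> 'a::cstar_algebra) \<Rightarrow> ('p \<Rightarrow> 'a) \<Rightarrow> bool" where
  "OGL_rep k P r s c d G act res u t \<longleftrightarrow>
     (\<forall>g\<in>carrier G. adj (u g) * u g = 1 \<and> u g * adj (u g) = 1) \<and>
     (\<forall>\<mu>\<in>P. t \<mu> * adj (t \<mu>) * t \<mu> = t \<mu>) \<and>
     (\<forall>v\<in>vertices P d. t v * t v = t v \<and> adj (t v) = t v) \<and>
     (\<forall>v\<in>vertices P d. \<forall>w\<in>vertices P d. v \<noteq> w \<longrightarrow> t v * t w = 0) \<and>
     (\<forall>\<mu>\<in>P. \<forall>\<nu>\<in>P. s \<mu> = r \<nu> \<longrightarrow> t (c \<mu> \<nu>) = t \<mu> * t \<nu>) \<and>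
     (\<forall>\<mu>\<in>P. adj (t \<mu>) * t \<mu> = t (s \<mu>)) \<and>
     (\<forall>v\<in>vertices P d. \<forall>n. inNk k n \<longrightarrow>
        t v = (\<Sum>\<mu>\<in>vpaths P r d v n. t \<mu> * adj (t \<mu>))) \<and>
     (\<forall>g\<in>carrier G. \<forall>h\<in>carrier G. u (g \<otimes>\<^bsub>G\<^esub> h) = u g * u h) \<and>
     (\<forall>g\<in>carrier G. \<forall>\<mu>\<in>P. u g * t \<mu> = t (act g \<mu>) * u (res g \<mu>))"

end

theory Submission
  imports Defs
begin

lemma vec_simps:
  "addv m zerov = m" "addv zerov m = m" "subv m zerov = m"
  by (auto simp: addv_def subv_def zerov_def)


lemma vec_facts:
  "inNk k b \<Longrightarrow> inNk k (subv b a)"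
  "leqv a b \<Longrightarrow> leqv b m \<Longrightarrow> leqv a m"
  "leqv a a"
  "leqv a b \<Longrightarrow> addv a (subv b a) = b"
  "leqv b m \<Longrightarrow> leqv (subv b a) (subv m a)"
  "leqv a b \<Longrightarrow> leqv b m \<Longrightarrow> subv (subv m a) (subv b a) = subv m b"
  "subv p p = zerov"
  "leqv zerov p"
  "inNk k zerov"
  by (auto simp: inNk_def subv_def addv_def leqv_def zerov_def fun_eq_iff diff_le_mono intro: le_trans)

locale kg =
  fixes k :: nat and P :: "'p set" and r s :: "'p \<Rightarrow> 'p" and c :: "'p \<Rightarrow> 'p \<Rightarrow> 'p"
    and d :: "'p \<Rightarrow> nat \<Rightarrow> nat"
  assumes KG: "kgraph k P r s c d" and RF: "row_finite_source_free k P r d"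
begin

lemma K1: "\<forall>\<mu>\<in>P. r \<mu> \<in> P \<and> s \<mu> \<in> P \<and> inNk k (d \<mu>)"
  using KG unfolding kgraph_def by (elim conjE) assumption

lemma K2: "\<forall>\<mu>\<in>P. r (r \<mu>) = r \<mu> \<and> s (r \<mu>) = r \<mu> \<and> r (s \<mu>) = s \<mu> \<and> s (s \<mu>) = s \<mu>"
  using KG unfolding kgraph_def by (elim conjE) assumption

lemma K3: "\<forall>\<mu>\<in>P. c (r \<mu>) \<mu> = \<mu> \<and> c \<mu> (s \<mu>) = \<mu>"
  using KG unfolding kgraph_def by (elim conjE) assumption

lemma K4: "\<forall>\<mu>\<in>P. \<forall>\<nu>\<in>P. s \<mu> = r \<nu> \<longrightarrow>
         c \<mu> \<nu> \<in> P \<and> r (c \<mu> \<nu>) = r \<mu> \<and> s (c \<mu> \<nu>) = s \<nu>"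
  using KG unfolding kgraph_def by (elim conjE) assumption

lemma K5: "\<forall>\<mu>\<in>P. \<forall>\<nu>\<in>P. \<forall>\<eta>\<in>P. s \<mu> = r \<nu> \<and> s \<nu> = r \<eta> \<longrightarrow>
         c (c \<mu> \<nu>) \<eta> = c \<mu> (c \<nu> \<eta>)"
  using KG unfolding kgraph_def by (elim conjE) assumption

lemma K6: "\<forall>\<mu>\<in>P. d (r \<mu>) = zerov"
  using KG unfolding kgraph_def by (elim conjE) assumption

lemma K7: "\<forall>\<mu>\<in>P. \<forall>\<nu>\<in>P. s \<mu> = r \<nu> \<longrightarrow> d (c \<mu> \<nu>) = addv (d \<mu>) (d \<nu>)"
  using KG unfolding kgraph_def by (elim conjE) assumption

lemma K8: "\<forall>\<mu>\<in>P. \<forall>m n. inNk k m \<and> inNk k n \<and> d \<mu> = addv m n \<longrightarrow>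
         (\<exists>!ab. fst ab \<in> P \<and> snd ab \<in> P \<and> s (fst ab) = r (snd ab) \<and>
                d (fst ab) = m \<and> d (snd ab) = n \<and> \<mu> = c (fst ab) (snd ab))"
  using KG unfolding kgraph_def by (elim conjE) assumption

lemma inP: "\<mu>\<in>P \<Longrightarrow> r \<mu> \<in> P" "\<mu>\<in>P \<Longrightarrow> s \<mu> \<in> P" "\<mu>\<in>P \<Longrightarrow> inNk k (d \<mu>)"
  using K1 by blast+

lemma rs_id: "\<mu>\<in>P \<Longrightarrow> r (r \<mu>) = r \<mu>" "\<mu>\<in>P \<Longrightarrow> s (r \<mu>) = r \<mu>"
  "\<mu>\<in>P \<Longrightarrow> r (s \<mu>) = s \<mu>" "\<mu>\<in>P \<Longrightarrow> s (s \<mu>) = s \<mu>"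
  using K2 by blast+

lemma cid: "\<mu>\<in>P \<Longrightarrow> c (r \<mu>) \<mu> = \<mu>" "\<mu>\<in>P \<Longrightarrow> c \<mu> (s \<mu>) = \<mu>"
  using K3 by blast+

lemma comp: assumes "\<mu>\<in>P" "\<nu>\<in>P" "s \<mu> = r \<nu>"
  shows "c \<mu> \<nu> \<in> P" "r (c \<mu> \<nu>) = r \<mu>" "s (c \<mu> \<nu>) = s \<nu>" "d (c \<mu> \<nu>) = addv (d \<mu>) (d \<nu>)"
  using K4 K7 assms by blast+

lemma assoc: "\<mu>\<in>P \<Longrightarrow> \<nu>\<in>P \<Longrightarrow> \<eta>\<in>P \<Longrightarrow> s \<mu> = r \<nu> \<Longrightarrow> s \<nu> = r \<eta> \<Longrightarrow>
         c (c \<mu> \<nu>) \<eta> = c \<mu> (c \<nu> \<eta>)"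
  using K5 by blast

lemma d_r: "\<mu>\<in>P \<Longrightarrow> d (r \<mu>) = zerov"
  using K6 by blast

lemma d_s: "\<mu>\<in>P \<Longrightarrow> d (s \<mu>) = zerov"
  using d_r[of "s \<mu>"] rs_id inP by metis

lemma UF: "\<mu>\<in>P \<Longrightarrow> inNk k m \<Longrightarrow> inNk k n \<Longrightarrow> d \<mu> = addv m n \<Longrightarrow>
         (\<exists>!ab. fst ab \<in> P \<and> snd ab \<in> P \<and> s (fst ab) = r (snd ab) \<and>
                d (fst ab) = m \<and> d (snd ab) = n \<and> \<mu> = c (fst ab) (snd ab))"
  using K8 by blast

definition fac :: "'p \<Rightarrow> (nat \<Rightarrow> nat) \<Rightarrow> 'p \<times> 'p" where
  "fac w m = (THE ab. fst ab \<in> P \<and> snd ab \<in> P \<and> s (fst ab) = r (snd ab) \<and>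
                d (fst ab) = m \<and> d (snd ab) = subv (d w) m \<and> w = c (fst ab) (snd ab))"

definition "pre w m = fst (fac w m)"
definition "suf w m = snd (fac w m)"

lemma F1: assumes "w\<in>P" "inNk k m" "leqv m (d w)"
  shows "pre w m \<in> P \<and> suf w m \<in> P \<and> s (pre w m) = r (suf w m) \<and> d (pre w m) = m
     \<and> d (suf w m) = subv (d w) m \<and> w = c (pre w m) (suf w m)"
proof -
  have i: "inNk k (subv (d w) m)" using inP(3)[OF assms(1)] unfolding inNk_def subv_def by auto
  have e: "d w = addv m (subv (d w) m)" using assms(3)
    by (auto simp: fun_eq_iff addv_def subv_def leqv_def)
  show ?thesis
    unfolding pre_def suf_def fac_def by (rule theI'[OF UF[OF assms(1) assms(2) i e]])
qed

lemma F2: assumes "a\<in>P" "b\<in>P" "s a = r b"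
  shows "pre (c a b) (d a) = a" "suf (c a b) (d a) = b"
proof -
  have e: "d (c a b) = addv (d a) (d b)" using comp assms by blast
  have e2: "subv (d (c a b)) (d a) = d b" unfolding e by (auto simp: fun_eq_iff addv_def subv_def)
  have "fac (c a b) (d a) = (a, b)"
    unfolding fac_def e2
    by (rule the1_equality[OF UF[OF comp(1)[OF assms] inP(3)[OF assms(1)] inP(3)[OF assms(2)] e]])
       (simp add: assms)
  then show "pre (c a b) (d a) = a" "suf (c a b) (d a) = b" unfolding pre_def suf_def by auto
qed

lemma G: assumes "w\<in>P" "inNk k a" "inNk k b" "leqv a b" "leqv b (d w)"
  shows "pre w b = c (pre w a) (pre (suf w a) (subv b a))"
    "suf w b = suf (suf w a) (subv b a)"
proof -
  have ad: "leqv a (d w)" using assms vec_facts(2) by blast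
  note A = F1[OF assms(1,2) ad]
  define B where "B = suf w a"
  have BP: "B \<in> P" "d B = subv (d w) a" using A B_def by auto
  have ib: "inNk k (subv b a)" "leqv (subv b a) (d B)"
    using vec_facts(1,5) assms BP by auto
  note C = F1[OF BP(1) ib]
  define C1 where "C1 = pre B (subv b a)"
  define C2 where "C2 = suf B (subv b a)"
  have C1P: "C1 \<in> P" "C2 \<in> P" "s C1 = r C2" "B = c C1 C2" "d C1 = subv b a"
    using C C1_def C2_def by auto
  have sA: "s (pre w a) = r C1" using A C1P comp(2) B_def by metis
  have w: "w = c (c (pre w a) C1) C2"
    using A B_def C1P assoc[of "pre w a" C1 C2] sA by metis
  have P1: "c (pre w a) C1 \<in> P" "s (c (pre w a) C1) = r C2"
    using comp A C1P sA by metis+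
  have dd: "d (c (pre w a) C1) = b" using comp(4)[of "pre w a" C1] A C1P sA vec_facts(4)[OF assms(4)] by metis
  show "pre w b = c (pre w a) (pre (suf w a) (subv b a))"
    using F2(1)[OF P1(1) C1P(2) P1(2)] w dd C1_def B_def by metis
  show "suf w b = suf (suf w a) (subv b a)"
    using F2(2)[OF P1(1) C1P(2) P1(2)] w dd C2_def B_def by metis
qed

lemma H: assumes "w\<in>P" "\<beta>\<in>P" "s w = r \<beta>" "inNk k a" "leqv a (d w)"
  shows "pre (c w \<beta>) a = pre w a" "suf (c w \<beta>) a = c (suf w a) \<beta>"
proof -
  note A = F1[OF assms(1,4,5)]
  have sB: "s (suf w a) = r \<beta>" using A comp(3) assms(3) by metis
  have e: "c w \<beta> = c (pre w a) (c (suf w a) \<beta>)"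
    using assoc[of "pre w a" "suf w a" \<beta>] A sB assms(2) by metis
  have Q: "c (suf w a) \<beta> \<in> P" "s (pre w a) = r (c (suf w a) \<beta>)"
    using comp A sB assms(2) by metis+
  show "pre (c w \<beta>) a = pre w a" "suf (c w \<beta>) a = c (suf w a) \<beta>"
    using F2[OF _ Q(1) Q(2)] A e by metis+
qed

lemma pre0: "B\<in>P \<Longrightarrow> pre B zerov = r B" "B\<in>P \<Longrightarrow> suf B zerov = B"
  using F2[of "r B" B] inP rs_id cid d_r by metis+

lemma pre_full: "w\<in>P \<Longrightarrow> pre w (d w) = w"
  using F2[of w "s w"] inP rs_id cid by metis

lemma pre_r: assumes "w\<in>P" "inNk k a" "leqv a (d w)"
  shows "r (pre w a) = r w" "s (suf w a) = s w"
  using F1[OF assms] comp by metis+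

definition "seg w p q = pre (suf w p) (subv q p)"

lemma S1: assumes "w\<in>P" "inNk k p" "inNk k q" "leqv p q" "leqv q (d w)"
  shows "seg w p q \<in> P" "d (seg w p q) = subv q p"
proof -
  have pd: "leqv p (d w)" using assms vec_facts(2) by blast
  note A = F1[OF assms(1,2) pd]
  have "inNk k (subv q p)" "leqv (subv q p) (d (suf w p))"
    using A vec_facts(1,5) assms by auto
  note B = F1[OF _ this]
  show "seg w p q \<in> P" "d (seg w p q) = subv q p" unfolding seg_def using A B by auto
qed

lemma S3: assumes "w\<in>P" "inNk k p" "inNk k q" "leqv p q" "leqv q (d w)"
  shows "r (seg w p q) = seg w p p" "s (seg w p q) = seg w q q"
proof -
  have pd: "leqv p (d w)" using assms vec_facts(2) by blast
  note A = F1[OF assms(1,2) pd]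
  have i: "inNk k (subv q p)" "leqv (subv q p) (d (suf w p))"
    using A vec_facts(1,5) assms by auto
  note B = F1[OF _ i]
  have "seg w p p = r (suf w p)" unfolding seg_def vec_facts(7) using pre0 A by blast
  then show "r (seg w p q) = seg w p p" unfolding seg_def using pre_r(1)[OF _ i] A by metis
  have "suf w q = suf (suf w p) (subv q p)" using G(2)[OF assms(1,2,3,4,5)] .
  moreover have "seg w q q = r (suf w q)" unfolding seg_def vec_facts(7)
    using pre0 F1[OF assms(1,3,5)] by blast
  ultimately show "s (seg w p q) = seg w q q" unfolding seg_def using B A by metis
qed

lemma S2: assumes "w\<in>P" "inNk k p" "inNk k q" "inNk k m" "leqv p q" "leqv q m" "leqv m (d w)"
  shows "seg w p m = c (seg w p q) (seg w q m)"
proof -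
  have pd: "leqv p (d w)" "leqv q (d w)" using assms vec_facts(2) by blast+
  note A = F1[OF assms(1,2) pd(1)]
  have i: "inNk k (subv q p)" "inNk k (subv m p)" "leqv (subv q p) (subv m p)"
     "leqv (subv m p) (d (suf w p))"
    using A vec_facts(1,5) assms by auto
  have "pre (suf w p) (subv m p) = c (pre (suf w p) (subv q p))
         (pre (suf (suf w p) (subv q p)) (subv (subv m p) (subv q p)))"
    using G(1)[OF _ i] A by blast
  moreover have "suf w q = suf (suf w p) (subv q p)" using G(2)[OF assms(1,2,3,5) pd(2)] .
  moreover have "subv (subv m p) (subv q p) = subv m q" using vec_facts(6) assms by blast
  ultimately show ?thesis unfolding seg_def by metis
qed

lemma S4: assumes "w\<in>P" "\<beta>\<in>P" "s w = r \<beta>" "inNk k p" "inNk k q" "leqv p q" "leqv q (d w)"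
  shows "seg (c w \<beta>) p q = seg w p q"
proof -
  have pd: "leqv p (d w)" using assms vec_facts(2) by blast
  note A = F1[OF assms(1,4) pd]
  have i: "inNk k (subv q p)" "leqv (subv q p) (d (suf w p))"
    using A vec_facts(1,5) assms by auto
  have "s (suf w p) = r \<beta>" using pre_r(2)[OF assms(1,4) pd] assms(3) by simp
  then show ?thesis unfolding seg_def using H[OF assms(1-4) pd] H(1)[OF _ assms(2) _ i] A by metis
qed

lemma S5: "w\<in>P \<Longrightarrow> seg w zerov q = pre w q"
  unfolding seg_def using pre0 by (simp add: vec_simps)

definition "one_k = (\<lambda>i. if i < k then 1 else (0::nat))"
definition "ext v = (SOME \<beta>. \<beta> \<in> P \<and> r \<beta> = v \<and> d \<beta> = one_k)"

lemma ext: assumes "v \<in> P" "d v = zerov" shows "ext v \<in> P \<and> r (ext v) = v \<and> d (ext v) = one_k"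
proof -
  have "inNk k one_k" unfolding inNk_def one_k_def by auto
  then have "vpaths P r d v one_k \<noteq> {}" using RF assms unfolding row_finite_source_free_def vertices_def by blast
  then have "\<exists>\<beta>. \<beta> \<in> P \<and> r \<beta> = v \<and> d \<beta> = one_k" unfolding vpaths_def by blast
  then show ?thesis unfolding ext_def by (rule someI_ex)
qed

primrec chain :: "'p \<Rightarrow> nat \<Rightarrow> 'p" where
  "chain a 0 = a"
| "chain a (Suc j) = c (chain a j) (ext (s (chain a j)))"

lemma chain: assumes "a \<in> P"
  shows "chain a j \<in> P \<and> d (chain a j) = addv (d a) (\<lambda>i. if i<k then j else 0) \<and> r (chain a j) = r a"
proof (induction j)
  case 0
  then show ?case using assms by (auto simp: addv_def fun_eq_iff)
next
  case (Suc j)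
  let ?w = "chain a j"
  have e: "ext (s ?w) \<in> P \<and> r (ext (s ?w)) = s ?w \<and> d (ext (s ?w)) = one_k"
    using ext[of "s ?w"] inP(2) d_s Suc by blast
  have "d (chain a (Suc j)) = addv (addv (d a) (\<lambda>i. if i<k then j else 0)) one_k"
    using comp(4)[of ?w "ext (s ?w)"] e Suc by simp
  also have "\<dots> = addv (d a) (\<lambda>i. if i<k then Suc j else 0)"
    by (auto simp: addv_def one_k_def fun_eq_iff)
  finally show ?case using comp(1,2)[of ?w "ext (s ?w)"] e Suc by simp
qed

lemma chain_mono: "a \<in> P \<Longrightarrow> j \<le> j' \<Longrightarrow> leqv (d (chain a j)) (d (chain a j'))"
  using chain by (auto simp: leqv_def addv_def)

lemma chain_cons: assumes "a \<in> P" "j \<le> j'" "inNk k p" "inNk k q" "leqv p q" "leqv q (d (chain a j))"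
  shows "seg (chain a j') p q = seg (chain a j) p q"
  using assms(2)
proof (induction j' rule: dec_induct)
  case base
  then show ?case by simp
next
  case (step n)
  let ?w = "chain a n"
  have e: "ext (s ?w) \<in> P \<and> r (ext (s ?w)) = s ?w"
    using ext[of "s ?w"] inP(2) d_s chain assms(1) by blast
  have "leqv q (d ?w)" using chain_mono[OF assms(1) step(1)] assms(6) vec_facts(2) by blast
  then have "seg (chain a (Suc n)) p q = seg ?w p q"
    using S4[of ?w "ext (s ?w)" p q] chain assms e by simp
  then show ?case using step by simp
qed

definition "J q = (\<Sum>i<k. q i)"

lemma J: assumes "inNk k q" "a \<in> P" shows "leqv q (d (chain a (J q)))"
proof -
  have "q i \<le> d a i + (if i < k then J q else 0)" for i
  proof (cases "i < k")
    case True
    then have "q i \<le> J q" unfolding J_def by (intro member_le_sum) auto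
    then show ?thesis using True by simp
  next
    case False
    then show ?thesis using assms(1) unfolding inNk_def by auto
  qed
  then show ?thesis using chain[OF assms(2)] by (auto simp: leqv_def addv_def)
qed

lemma Jmono: "leqv q m \<Longrightarrow> J q \<le> J m"
  unfolding J_def leqv_def by (intro sum_mono) auto

lemma J0: "J zerov = 0" unfolding J_def zerov_def by simp

definition "xpath a = (\<lambda>p q. seg (chain a (J q)) p q)"

lemma inf_ext: assumes "a \<in> P"
  shows "is_infpath k P r s c d (xpath a) \<and> xpath a zerov zerov = r a \<and> xpath a zerov (d a) = a"
proof (intro conjI)
  show "xpath a zerov zerov = r a" unfolding xpath_def J0 using S5 pre0 assms by simp
  have "xpath a zerov (d a) = seg (chain a 0) zerov (d a)" unfolding xpath_def
    by (rule chain_cons) (use assms inP vec_facts in auto)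
  then show "xpath a zerov (d a) = a" using S5 pre_full assms by simp
  show "is_infpath k P r s c d (xpath a)"
    unfolding is_infpath_def
  proof (intro conjI allI impI)
    fix p q assume h: "inNk k p \<and> inNk k q \<and> leqv p q"
    let ?L = "chain a (J q)"
    have LP: "?L \<in> P" using chain assms by blast
    have qL: "leqv q (d ?L)" using J h assms by blast
    show "xpath a p q \<in> P" "d (xpath a p q) = subv q p" unfolding xpath_def
      using S1[OF LP _ _ _ qL] h by auto
    show "s (xpath a p q) = xpath a q q" unfolding xpath_def
      using S3(2)[OF LP _ _ _ qL] h by auto
    have "seg ?L p p = seg (chain a (J p)) p p"
      by (rule chain_cons) (use assms h Jmono J vec_facts in auto)
    then show "r (xpath a p q) = xpath a p p" unfolding xpath_def
      using S3(1)[OF LP _ _ _ qL] h by auto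
  next
    fix p q m assume h: "inNk k p \<and> inNk k q \<and> inNk k m \<and> leqv p q \<and> leqv q m"
    let ?L = "chain a (J m)"
    have LP: "?L \<in> P" using chain assms by blast
    have mL: "leqv m (d ?L)" using J h assms by blast
    have "seg ?L p q = seg (chain a (J q)) p q"
      by (rule chain_cons) (use assms h Jmono J in auto)
    then show "xpath a p m = c (xpath a p q) (xpath a q m)" unfolding xpath_def
      using S2[OF LP _ _ _ _ _ mL] h by auto
  qed
qed

end

lemma cat_split: assumes "is_cat k P r s c d m x y" "inNk k N" "leqv (d m) N" "inNk k (d m)"
  shows "y zerov N = c m (x zerov (subv N (d m)))"
proof -
  have y: "is_infpath k P r s c d y" "y zerov (d m) = m"
    and cl: "\<forall>p q. inNk k p \<and> inNk k q \<and> leqv p q \<longrightarrow> y (addv (d m) p) (addv (d m) q) = x p q"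
    using assms(1) unfolding is_cat_def by blast+
  have "y zerov N = c (y zerov (d m)) (y (d m) N)"
    using y(1) assms(2,3,4) vec_facts(8,9) unfolding is_infpath_def by blast
  moreover have "y (addv (d m) zerov) (addv (d m) (subv N (d m))) = x zerov (subv N (d m))"
    using cl vec_facts(1,8,9) assms(2) by blast
  ultimately show ?thesis using y(2) vec_simps(1) vec_facts(4)[OF assms(3)] by metis
qed

lemma OGL_parts1: assumes "OGL_rep k P r s c d G act res u t"
  shows "\<forall>\<mu>\<in>P. \<forall>\<nu>\<in>P. s \<mu> = r \<nu> \<longrightarrow> t (c \<mu> \<nu>) = t \<mu> * t \<nu>"
  using assms unfolding OGL_rep_def by (elim conjE) assumption

lemma OGL_parts2: assumes "OGL_rep k P r s c d G act res u t"
  shows "\<forall>v\<in>vertices P d. \<forall>n. inNk k n \<longrightarrow> t v = (\<Sum>\<mu>\<in>vpaths P r d v n. t \<mu> * adj (t \<mu>))"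
  using assms unfolding OGL_rep_def by (elim conjE) assumption

lemma sum_lemma: assumes "kgraph k P r s c d" "row_finite_source_free k P r d"
  "OGL_rep k P r s c d G act res u t" "w \<in> P" "inNk k n"
  shows "t w * adj (t w) = (\<Sum>l\<in>c w ` vpaths P r d (s w) n. t l * adj (t l))"
proof -
  interpret K: kg k P r s c d using assms(1,2) by unfold_locales
  let ?V = "vpaths P r d (s w) n"
  have sw: "s w \<in> P" "s w = r (s w)" using K.inP K.rs_id assms(4) by auto
  have v: "s w \<in> vertices P d" unfolding vertices_def using sw K.d_s assms(4) by auto
  have tw: "t w = t w * t (s w)" using OGL_parts1[OF assms(3)] sw assms(4) K.cid by metis
  have ts: "t (s w) = (\<Sum>a\<in>?V. t a * adj (t a))" using OGL_parts2[OF assms(3)] v assms(5) by blast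
  have "t w * adj (t w) = t w * t (s w) * adj (t w)" using tw by simp
  also have "\<dots> = (\<Sum>a\<in>?V. t w * (t a * adj (t a)) * adj (t w))"
    unfolding ts by (simp add: sum_distrib_left sum_distrib_right)
  also have "\<dots> = (\<Sum>a\<in>?V. t (c w a) * adj (t (c w a)))"
  proof (rule sum.cong)
    fix a assume "a \<in> ?V"
    then have "a \<in> P" "s w = r a" unfolding vpaths_def by auto
    then have "t (c w a) = t w * t a" using OGL_parts1[OF assms(3)] assms(4) by blast
    then show "t w * (t a * adj (t a)) * adj (t w) = t (c w a) * adj (t (c w a))"
      by (simp add: adj_mult mult.assoc)
  qed simp
  also have "\<dots> = (\<Sum>l\<in>c w ` ?V. t l * adj (t l))"
  proof (rule sum.reindex[symmetric, unfolded comp_def])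
    show "inj_on (c w) ?V"
    proof (rule inj_onI)
      fix a b assume "a \<in> ?V" "b \<in> ?V" "c w a = c w b"
      then have "a \<in> P" "b \<in> P" "s w = r a" "s w = r b" "c w a = c w b" unfolding vpaths_def by auto
      then show "a = b" using K.F2(2)[of w a] K.F2(2)[of w b] assms(4) by metis
    qed
  qed
  finally show ?thesis .
qed


lemma SS1: "self_similar k P r s c d G act res \<Longrightarrow> group G"
  unfolding self_similar_def by (elim conjE) assumption
lemma SS2: "self_similar k P r s c d G act res \<Longrightarrow> (\<forall>g\<in>carrier G. bij_betw (act g) P P \<and>
        (\<forall>\<mu>\<in>P. d (act g \<mu>) = d \<mu> \<and> r (act g \<mu>) = act g (r \<mu>) \<and> s (act g \<mu>) = act g (s \<mu>)))"
  unfolding self_similar_def by (elim conjE) assumption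
lemma SS3: "self_similar k P r s c d G act res \<Longrightarrow> (\<forall>\<mu>\<in>P. act \<one>\<^bsub>G\<^esub> \<mu> = \<mu>)"
  unfolding self_similar_def by (elim conjE) assumption
lemma SS4: "self_similar k P r s c d G act res \<Longrightarrow> (\<forall>g\<in>carrier G. \<forall>h\<in>carrier G. \<forall>\<mu>\<in>P. act (g \<otimes>\<^bsub>G\<^esub> h) \<mu> = act g (act h \<mu>))"
  unfolding self_similar_def by (elim conjE) assumption
lemma SS5: "self_similar k P r s c d G act res \<Longrightarrow> (\<forall>g\<in>carrier G. \<forall>v\<in>vertices P d. res g v = g)"
  unfolding self_similar_def by (elim conjE) assumption

theorem lemma6p9:
  fixes k :: nat and P :: "'p set" and r s :: "'p \<Rightarrow> 'p" and c :: "'p \<Rightarrow> 'p \<Rightarrow> 'p"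
    and d :: "'p \<Rightarrow> nat \<Rightarrow> nat" and G :: "('g, 'b) monoid_scheme"
    and act :: "'g \<Rightarrow> 'p \<Rightarrow> 'p" and res :: "'g \<Rightarrow> 'p \<Rightarrow> 'g"
    and u :: "'g \<Rightarrow> 'a::cstar_algebra" and t :: "'p \<Rightarrow> 'a"
    and \<mu> \<nu> :: 'p and g :: 'g
  assumes "kgraph k P r s c d"
    and "row_finite_source_free k P r d"
    and "self_similar k P r s c d G act res"
    and "finite (vertices P d)"
    and "cycline k P r s c d G act res \<mu> g \<nu>"
    and "OGL_rep k P r s c d G act res u t"
  shows "t \<mu> * adj (t \<mu>) = t \<nu> * adj (t \<nu>)"
proof -
  interpret K: kg k P r s c d using assms(1,2) by unfold_locales
  have grp: "group G" using SS1[OF assms(3)] .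
  have mP: "\<mu> \<in> P" and nP: "\<nu> \<in> P" and gG: "g \<in> carrier G" and smu: "s \<mu> = act g (s \<nu>)"
    and CY: "\<forall>x. is_infpath k P r s c d x \<and> x zerov zerov = s \<nu> \<longrightarrow>
        (\<exists>y. is_cat k P r s c d \<mu> (act_inf act res g x) y \<and> is_cat k P r s c d \<nu> x y)"
    using assms(5) unfolding cycline_def by blast+
  define N where "N = (\<lambda>i. max (d \<mu> i) (d \<nu> i))"
  have iN: "inNk k N" using K.inP(3)[OF mP] K.inP(3)[OF nP] unfolding N_def inNk_def by auto
  have lN: "leqv (d \<mu>) N" "leqv (d \<nu>) N" unfolding N_def leqv_def by auto
  have snP: "s \<nu> \<in> P" using K.inP nP by blast
  have snV: "s \<nu> \<in> vertices P d" unfolding vertices_def using snP K.d_s nP by auto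
  have actP: "\<And>h a. h \<in> carrier G \<Longrightarrow> a \<in> P \<Longrightarrow> act h a \<in> P \<and> d (act h a) = d a \<and> r (act h a) = act h (r a)"
    using SS2[OF assms(3)] bij_betwE by metis
  have key: "y zerov N = c \<nu> (x zerov (subv N (d \<nu>))) \<and> y zerov N = c \<mu> (act g (x zerov (subv N (d \<mu>))))"
    if x: "is_infpath k P r s c d x" "x zerov zerov = s \<nu>"
     and y: "is_cat k P r s c d \<mu> (act_inf act res g x) y" "is_cat k P r s c d \<nu> x y" for x y
  proof -
    have "y zerov N = c \<nu> (x zerov (subv N (d \<nu>)))"
      using cat_split[OF y(2) iN lN(2) K.inP(3)[OF nP]] .
    moreover have "y zerov N = c \<mu> (act_inf act res g x zerov (subv N (d \<mu>)))"
      using cat_split[OF y(1) iN lN(1) K.inP(3)[OF mP]] .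
    moreover have "res g (x zerov zerov) = g" using SS5[OF assms(3)] gG snV x(2) by simp
    ultimately show ?thesis unfolding act_inf_def by simp
  qed
  have xfacts: "x zerov q \<in> P \<and> d (x zerov q) = q \<and> r (x zerov q) = x zerov zerov"
    if "is_infpath k P r s c d x" "inNk k q" for x q
    using that vec_facts(8,9) vec_simps(3) unfolding is_infpath_def by metis
  let ?A = "c \<nu> ` vpaths P r d (s \<nu>) (subv N (d \<nu>))"
  let ?B = "c \<mu> ` vpaths P r d (s \<mu>) (subv N (d \<mu>))"
  have iNm: "inNk k (subv N (d \<mu>))" "inNk k (subv N (d \<nu>))" using iN vec_facts(1) by auto
  have "?A \<subseteq> ?B"
  proof
    fix l assume "l \<in> ?A"
    then obtain a where a: "a \<in> P" "r a = s \<nu>" "d a = subv N (d \<nu>)" "l = c \<nu> a"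
      unfolding vpaths_def by auto
    let ?x = "K.xpath a"
    have x: "is_infpath k P r s c d ?x" "?x zerov zerov = s \<nu>" "?x zerov (subv N (d \<nu>)) = a"
      using K.inf_ext[OF a(1)] a by auto
    obtain y where y: "is_cat k P r s c d \<mu> (act_inf act res g ?x) y" "is_cat k P r s c d \<nu> ?x y"
      using CY x by blast
    note kk = key[OF x(1,2) y]
    let ?z = "?x zerov (subv N (d \<mu>))"
    have z: "?z \<in> P" "d ?z = subv N (d \<mu>)" "r ?z = s \<nu>" using xfacts[OF x(1) iNm(1)] x(2) by auto
    have "act g ?z \<in> vpaths P r d (s \<mu>) (subv N (d \<mu>))"
      unfolding vpaths_def using actP[OF gG z(1)] z smu by auto
    moreover have "l = c \<mu> (act g ?z)" using kk x(3) a(4) by metis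
    ultimately show "l \<in> ?B" by blast
  qed
  moreover have "?B \<subseteq> ?A"
  proof
    fix l assume "l \<in> ?B"
    then obtain b where b: "b \<in> P" "r b = s \<mu>" "d b = subv N (d \<mu>)" "l = c \<mu> b"
      unfolding vpaths_def by auto
    define h where "h = inv\<^bsub>G\<^esub> g"
    have hG: "h \<in> carrier G" using grp gG unfolding h_def by (simp add: group.inv_closed)
    define a where "a = act h b"
    have aP: "a \<in> P" "d a = subv N (d \<mu>)" using actP[OF hG b(1)] b unfolding a_def by auto
    have "r a = act h (act g (s \<nu>))" using actP[OF hG b(1)] b smu unfolding a_def by simp
    also have "\<dots> = act (h \<otimes>\<^bsub>G\<^esub> g) (s \<nu>)" using SS4[OF assms(3)] hG gG snP by simp
    also have "\<dots> = s \<nu>" using SS3[OF assms(3)] snP grp gG unfolding h_def by (simp add: group.l_inv)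
    finally have ra: "r a = s \<nu>" .
    have gab: "act g a = b"
    proof -
      have "act g a = act (g \<otimes>\<^bsub>G\<^esub> h) b" using SS4[OF assms(3)] hG gG b(1) unfolding a_def by simp
      also have "\<dots> = b" using SS3[OF assms(3)] b(1) grp gG unfolding h_def by (simp add: group.r_inv)
      finally show ?thesis .
    qed
    let ?x = "K.xpath a"
    have x: "is_infpath k P r s c d ?x" "?x zerov zerov = s \<nu>" "?x zerov (subv N (d \<mu>)) = a"
      using K.inf_ext[OF aP(1)] aP ra by auto
    obtain y where y: "is_cat k P r s c d \<mu> (act_inf act res g ?x) y" "is_cat k P r s c d \<nu> ?x y"
      using CY x by blast
    note kk = key[OF x(1,2) y]
    let ?z = "?x zerov (subv N (d \<nu>))"
    have z: "?z \<in> P" "d ?z = subv N (d \<nu>)" "r ?z = s \<nu>" using xfacts[OF x(1) iNm(2)] x(2) by auto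
    have "?z \<in> vpaths P r d (s \<nu>) (subv N (d \<nu>))" unfolding vpaths_def using z by auto
    moreover have "l = c \<nu> ?z" using kk x(3) b(4) gab by metis
    ultimately show "l \<in> ?A" by blast
  qed
  ultimately have AB: "?A = ?B" by blast
  show ?thesis
    using sum_lemma[OF assms(1,2,6) mP iNm(1)] sum_lemma[OF assms(1,2,6) nP iNm(2)] AB by simp
qed

end
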